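(* Suppose that $p$ is an odd prime. Let $\mu$ denote the number of integers $j$ with $1\le j<\frac{p}{2}$ such that the inverse $j^{-1}$ of $j$ modulo $p$ (taken as the representative in $\{1,\dots,p-1\}$) is also less than $\frac{p}{2}$. (1) If $p\equiv 3\pmod 4$, then $(p-1)!!\equiv (-1)^{\frac{\mu+1}{2}} \pmod p$. (2) If $p\equiv 1\pmod 4$, then $(p-1)!!\equiv (-1)^{\frac{\mu+1}{2}}\, i_p \pmod p$, where $i_p$ is the unique natural number less than $\frac{p}{2}$ with $i_p^2\equiv -1 \pmod p$.
   Context: For a natural number $n$, the double factorial $n!!$ is the product of the natural numbers less than or equal to $n$ that have the same parity as $n$. *)

theory Defs
  imports "HOL-Number_Theory.Number_Theory"
begin

fun dfact :: "nat \<Rightarrow> nat" where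
  "dfact 0 = 1"
| "dfact (Suc 0) = 1"
| "dfact (Suc (Suc n)) = Suc (Suc n) * dfact n"

definition modinv :: "nat \<Rightarrow> nat \<Rightarrow> nat" where
  "modinv p j = (THE k. k \<in> {1..p-1} \<and> [j * k = 1] (mod p))"

definition mu :: "nat \<Rightarrow> nat" where
  "mu p = card {j. 1 \<le> j \<and> 2 * j < p \<and> 2 * modinv p j < p}"

definition ip :: "nat \<Rightarrow> nat" where
  "ip p = (THE i. 2 * i < p \<and> [int i ^ 2 = -1] (mod int p))"

end

theory Submission imports Defs begin

lemma modinv_unique:
  assumes "prime p" "1 \<le> k" "k < p" "[j * k = 1] (mod p)"
  shows "modinv p j = k"
  unfolding modinv_def
proof (rule the_equality)
  show "k \<in> {1..p-1} \<and> [j * k = 1] (mod p)" using assms by auto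
next
  fix k' assume h: "k' \<in> {1..p - 1} \<and> [j * k' = 1] (mod p)"
  have cop: "coprime j p"
    using assms(4) by (metis coprime_iff_invertible_nat One_nat_def)
  have "[j * k' = j * k] (mod p)" using h assms(4) by (meson cong_sym cong_trans)
  then have "[k' = k] (mod p)" using cop cong_mult_lcancel_nat by blast
  then show "k' = k" using h assms cong_less_modulus_unique_nat
    by (metis atLeastAtMost_iff diff_less le_less_trans less_one not_le prime_gt_0_nat)
qed

lemma modinv_props:
  assumes "prime p" "1 \<le> j" "j < p"
  shows "1 \<le> modinv p j \<and> modinv p j < p \<and> [j * modinv p j = 1] (mod p)"
proof -
  have "coprime j p" using assms
    by (metis coprime_commute less_le_trans not_le prime_imp_coprime_nat zero_less_one dvd_imp_le le_less_trans  less_imp_le_nat nat_dvd_not_less not_one_le_zero)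
  then obtain x where x: "[j * x = Suc 0] (mod p)" using cong_solve_coprime_nat by blast
  define k where "k = x mod p"
  have k: "[j * k = 1] (mod p)" unfolding k_def using x
    by (metis One_nat_def cong_def mod_mult_right_eq)
  have "k < p" unfolding k_def using assms prime_gt_0_nat by auto
  moreover have "k \<noteq> 0" proof assume "k = 0" then show False using k prime_gt_1_nat[OF assms(1)] by (auto simp: cong_def) qed
  ultimately have "1 \<le> k" "k < p" by auto
  then show ?thesis using modinv_unique[OF assms(1) _ _ k] k by auto
qed
lemma inv_prod:
  fixes T :: "nat set" and c m :: int and s :: "nat \<Rightarrow> nat"
  assumes "finite T" "\<forall>x\<in>T. s x \<in> T \<and> s (s x) = x \<and> s x \<noteq> x \<and> [int x * int (s x) = c] (mod m)"
  shows "even (card T) \<and> [(\<Prod>x\<in>T. int x) = c ^ (card T div 2)] (mod m)"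
  using assms
proof (induction "card T" arbitrary: T rule: less_induct)
  case less
  show ?case
  proof (cases "T = {}")
    case True then show ?thesis by simp
  next
    case False
    then obtain x where x: "x \<in> T" by blast
    define T' where "T' = T - {x, s x}"
    have sx: "s x \<in> T" "s x \<noteq> x" "s (s x) = x" "[int x * int (s x) = c] (mod m)" using less.prems x by auto
    have fin: "finite T'" using less.prems unfolding T'_def by auto
    have "card {x, s x} \<le> card T" using sx x less.prems(1) by (intro card_mono) auto
    then have c2: "card T \<ge> 2" using sx by simp
    have cT: "card T = card T' + 2" unfolding T'_def using sx x less.prems(1) c2
      by (simp add: card_Diff_subset)
    have H: "\<forall>y\<in>T'. s y \<in> T' \<and> s (s y) = y \<and> s y \<noteq> y \<and> [int y * int (s y) = c] (mod m)"
    proof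
      fix y assume y: "y \<in> T'"
      then have yT: "y \<in> T" "y \<noteq> x" "y \<noteq> s x" unfolding T'_def by auto
      have "s y \<noteq> x" using yT less.prems by metis
      moreover have "s y \<noteq> s x" using yT less.prems x by metis
      ultimately show "s y \<in> T' \<and> s (s y) = y \<and> s y \<noteq> y \<and> [int y * int (s y) = c] (mod m)"
        using yT less.prems unfolding T'_def by auto
    qed
    have IH: "even (card T') \<and> [(\<Prod>x\<in>T'. int x) = c ^ (card T' div 2)] (mod m)"
      using less.hyps[of T'] cT fin H by auto
    have "T = insert x (insert (s x) T')" unfolding T'_def using x sx by auto
    then have P: "(\<Prod>x\<in>T. int x) = int x * int (s x) * (\<Prod>x\<in>T'. int x)"
    proof -
      assume e: "T = insert x (insert (s x) T')"
      have "x \<notin> insert (s x) T'" "s x \<notin> T'" using sx unfolding T'_def by auto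
      then show ?thesis by (subst e, simp add: fin)
    qed
    have "[int x * int (s x) * (\<Prod>x\<in>T'. int x) = c * c ^ (card T' div 2)] (mod m)"
      using IH sx(4) by (simp add: cong_mult)
    moreover have "card T div 2 = Suc (card T' div 2)" using cT by simp
    ultimately show ?thesis using P IH cT by simp
  qed
qed

lemma sq_one:
  fixes p j :: nat
  assumes "prime p" "1 \<le> j" "j < p" "[j * j = 1] (mod p)"
  shows "j = 1 \<or> j = p - 1"
proof -
  have pp: "prime (int p)" using assms(1) by simp
  have "[int j * int j = 1] (mod int p)" using assms(4) cong_int_iff[of "j*j" 1 p] by simp
  moreover have "0 < int j" using assms(2) by simp
  ultimately have "[int j = 1] (mod int p) \<or> [int j = - 1] (mod int p)"
    using cong_square[OF pp] by blast
  then show ?thesis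
  proof
    assume "[int j = 1] (mod int p)"
    then have "[j = 1] (mod p)" using cong_int_iff[of j 1 p] by simp
    moreover have "1 < p" using prime_gt_1_nat[OF assms(1)] .
    ultimately have "j = 1" using cong_less_modulus_unique_nat assms(3) by blast
    then show ?thesis by simp
  next
    assume "[int j = - 1] (mod int p)"
    then have "int p dvd int j + 1" by (simp add: cong_iff_dvd_diff)
    moreover have e: "int (j + 1) = int j + 1" by simp
    ultimately have "int p dvd int (j + 1)" unfolding e by blast
    then have "p dvd j + 1" by (simp only: of_nat_dvd_iff)
    then have "p \<le> j + 1" using dvd_imp_le by force
    then show ?thesis using assms(3) by linarith
  qed
qed

lemma sqrtm1_unique:
  fixes p a b :: nat
  assumes "prime p" "2 * a < p" "2 * b < p" "[int a ^ 2 = -1] (mod int p)" "[int b ^ 2 = -1] (mod int p)"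
  shows "a = b"
proof -
  have pp: "prime (int p)" using assms(1) by simp
  have "[int a ^ 2 = int b ^ 2] (mod int p)" using cong_trans[OF assms(4) cong_sym[OF assms(5)]] .
  then have "int p dvd int a ^ 2 - int b ^ 2" by (simp add: cong_iff_dvd_diff)
  moreover have eq: "int a ^ 2 - int b ^ 2 = (int a - int b) * (int a + int b)"
    by (simp add: power2_eq_square ring_distribs)
  ultimately have "int p dvd (int a - int b) * (int a + int b)" by (simp only:)
  then have "int p dvd (int a - int b) \<or> int p dvd (int a + int b)"
    using prime_dvd_mult_iff[OF pp] by simp
  then show ?thesis
  proof
    assume "int p dvd (int a - int b)"
    then have "[int a = int b] (mod int p)" by (simp add: cong_iff_dvd_diff)
    then have "[a = b] (mod p)" by (simp add: cong_int_iff)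
    moreover have "a < p" "b < p" using assms(2,3) by auto
    ultimately show ?thesis using cong_less_modulus_unique_nat by blast
  next
    assume d: "int p dvd (int a + int b)"
    have "a \<noteq> 0"
    proof
      assume "a = 0"
      then have "int p dvd 1" using assms(4) by (simp add: cong_iff_dvd_diff)
      then have "int p dvd int 1" by simp
      then have "p dvd 1" by (simp only: of_nat_dvd_iff)
      then show False using assms(1) by simp
    qed
    then have "0 < int a + int b" by simp
    moreover have "int a + int b < int p" using assms(2,3) by linarith
    ultimately show ?thesis using zdvd_imp_le[OF d] by linarith
  qed
qed

lemma sqrtm1_mod4:
  fixes p x :: nat
  assumes "prime p" "odd p" "[int x ^ 2 = -1] (mod int p)"
  shows "[p = 1] (mod 4)"
proof -
  have p2: "p > 2" using assms using prime_ge_2_nat[OF assms(1)] assms(2) by (cases "p = 2") auto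
  define h where "h = (p - 1) div 2"
  have ph: "p = 2 * h + 1" using assms(2) p2 unfolding h_def by simp
  have nd: "\<not> p dvd x"
  proof
    assume "p dvd x"
    then have "int p dvd int x ^ 2" by (simp add: power2_eq_square)
    then have "int p dvd -1" using cong_dvd_iff[OF assms(3)] by simp
    then have "int p dvd 1" by simp
    then show False using p2 by simp
  qed
  have "[x ^ (p - 1) = 1] (mod p)" using fermat_theorem[OF assms(1) nd] .
  then have "[int x ^ (p - 1) = 1] (mod int p)" using cong_int_iff[of "x^(p-1)" 1 p] by simp
  moreover have "int x ^ (p - 1) = (int x ^ 2) ^ h" using ph by (simp add: power_mult)
  moreover have "[(int x ^ 2) ^ h = (-1) ^ h] (mod int p)" using assms(3) by (rule cong_pow)
  ultimately have "[(-1) ^ h = (1::int)] (mod int p)" by (metis cong_sym cong_trans)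
  then have "even h"
  proof (rule contrapos_pp)
    assume "odd h"
    then have "\<not> int p dvd 2" using p2 by (auto dest: zdvd_imp_le)
    then show "\<not> [(-1) ^ h = (1::int)] (mod int p)" using \<open>odd h\<close>
      by (simp add: cong_iff_dvd_diff)
  qed
  then obtain k where "h = 2 * k" by (rule evenE)
  then have "p = 4 * k + 1" using ph by simp
  then show ?thesis by (simp add: cong_def)
qed

lemma dfact_even: "dfact (2 * n) = 2 ^ n * fact n"
proof (induction n)
  case 0 then show ?case by simp
next
  case (Suc n)
  have "dfact (2 * Suc n) = dfact (Suc (Suc (2 * n)))" by simp
  also have "\<dots> = (2 * n + 2) * dfact (2 * n)" by simp
  also have "\<dots> = 2 ^ Suc n * fact (Suc n)" using Suc by (simp add: algebra_simps)
  finally show ?case .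
qed

lemma two_pow:
  fixes p :: nat
  assumes "prime p" "odd p"
  shows "[(2::int) ^ ((p - 1) div 2) = (-1) ^ ((p - 1) div 2 - (p - 1) div 2 div 2)] (mod int p)"
proof -
  define h where "h = (p - 1) div 2"
  have p2: "p > 2" using prime_ge_2_nat[OF assms(1)] assms(2) by (cases "p = 2") auto
  have ph: "p = 2 * h + 1" using assms(2) p2 unfolding h_def by simp
  have nz: "[(2::int) \<noteq> 0] (mod int p)"
  proof
    assume "[(2::int) = 0] (mod int p)"
    then have "int p dvd 2" by (simp add: cong_0_iff)
    then have "int p \<le> 2" by (rule zdvd_imp_le) simp
    then show False using p2 by simp
  qed
  interpret G: GAUSS p 2 using assms(1) p2 nz by unfold_locales auto
  have hh: "(int p - 1) div 2 = int h" using ph by simp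
  have C: "G.C = (\<lambda>x. x * 2) ` {0<..int h}"
  proof -
    have "G.C = (\<lambda>x. x mod int p) ` (\<lambda>x. x * 2) ` {0<..int h}"
      unfolding G.C_def G.B_def G.A_def hh ..
    also have "\<dots> = (\<lambda>x. x) ` (\<lambda>x. x * 2) ` {0<..int h}"
    proof (rule image_cong[OF refl])
      fix y assume "y \<in> (\<lambda>x. x * 2) ` {0<..int h}"
      then obtain x where "y = x * 2" "0 < x" "x \<le> int h" by auto
      then have "0 \<le> y" "y < int p" using ph by auto
      then show "y mod int p = y" by simp
    qed
    finally show ?thesis by simp
  qed
  have E: "G.E = (\<lambda>x. x * 2) ` {int (h div 2) + 1..int h}"
  proof -
    have "G.E = G.C \<inter> {int h<..}" unfolding G.E_def hh ..
    also have "\<dots> = (\<lambda>x. x * 2) ` {int (h div 2) + 1..int h}"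
      unfolding C by (auto simp: image_iff)
    finally show ?thesis .
  qed
  have "card G.E = card {int (h div 2) + 1..int h}"
    unfolding E by (rule card_image) (simp add: inj_on_def)
  also have "\<dots> = h - h div 2" by simp
  finally have cE: "card G.E = h - h div 2" .
  have "nat ((int p - 1) div 2) = h" using hh by simp
  then show ?thesis using G.pre_gauss_lemma cE unfolding h_def by simp
qed

lemma neg1_pow_eq: "even (m + n) \<Longrightarrow> (-1::int) ^ m = (-1) ^ n"
  by (cases "even m") (auto simp: neg_one_even_power neg_one_odd_power)

theorem theorem8:
  fixes p :: nat
  assumes "prime p" and "odd p"
  shows "([p = 3] (mod 4) \<longrightarrow>
           [int (dfact (p - 1)) = (-1) ^ ((mu p + 1) div 2)] (mod int p))
       \<and> ([p = 1] (mod 4) \<longrightarrow>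
           [int (dfact (p - 1)) = (-1) ^ ((mu p + 1) div 2) * int (ip p)] (mod int p))"
proof -
  define h where "h = (p - 1) div 2"
  have p2: "p > 2" using prime_ge_2_nat[OF assms(1)] assms(2) by (cases "p = 2") auto
  have ph: "p = 2 * h + 1" using assms(2) p2 unfolding h_def by simp
  have h1: "1 \<le> h" using ph p2 by simp
  define S where "S = {1..h}"
  define iv where "iv = modinv p"
  have ivS: "1 \<le> iv j \<and> iv j < p \<and> [j * iv j = 1] (mod p)" if "1 \<le> j" "j < p" for j
    unfolding iv_def using modinv_props[OF assms(1) that] .
  have ivu: "iv j = k" if "1 \<le> k" "k < p" "[j * k = 1] (mod p)" for j k
    unfolding iv_def using modinv_unique[OF assms(1) that] .
  have iviv: "iv (iv j) = j" if "1 \<le> j" "j < p" for j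
  proof -
    have "[iv j * j = 1] (mod p)" using ivS[OF that] by (simp add: mult.commute)
    then show ?thesis using ivu that by blast
  qed
  define S1 where "S1 = {j \<in> S. iv j \<le> h}"
  define S2 where "S2 = {j \<in> S. h < iv j}"
  have finS: "finite S" unfolding S_def by simp
  have fin1: "finite S1" "finite S2" unfolding S1_def S2_def using finS by auto
  have Sdisj: "S1 \<inter> S2 = {}" "S = S1 \<union> S2" unfolding S1_def S2_def by auto
  have cardS: "card S1 + card S2 = h"
  proof -
    have "card S = h" unfolding S_def by simp
    then show ?thesis using card_Un_disjoint[OF fin1 Sdisj(1)] Sdisj(2) by simp
  qed
  have muS: "mu p = card S1"
  proof -
    have "{j. 1 \<le> j \<and> 2 * j < p \<and> 2 * modinv p j < p} = S1"
      unfolding S1_def S_def iv_def using ph by auto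
    then show ?thesis unfolding mu_def by simp
  qed
  have jp: "j < p" if "j \<in> S" for j using that ph unfolding S_def by auto
  have j1: "1 \<le> j" if "j \<in> S" for j using that unfolding S_def by auto
  have one: "iv 1 = 1" using ivu[of 1 1] p2 by simp
  define S1' where "S1' = S1 - {1}"
  have oneS1: "1 \<in> S1" unfolding S1_def S_def using one h1 by simp
  have "card S1 > 0" using oneS1 fin1(1) by (auto simp: card_gt_0_iff)
  then have cS1: "card S1 = card S1' + 1" unfolding S1'_def using oneS1 fin1(1)
    by (simp add: card_Diff_singleton_if)
  have P1: "even (card S1') \<and> [(\<Prod>x\<in>S1'. int x) = 1 ^ (card S1' div 2)] (mod int p)"
  proof (rule inv_prod)
    show "finite S1'" unfolding S1'_def using fin1 by simp
    show "\<forall>x\<in>S1'. iv x \<in> S1' \<and> iv (iv x) = x \<and> iv x \<noteq> x \<and> [int x * int (iv x) = 1] (mod int p)"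
    proof
      fix x assume x: "x \<in> S1'"
      then have xS: "x \<in> S" "iv x \<le> h" "x \<noteq> 1" unfolding S1'_def S1_def by auto
      have a: "1 \<le> iv x" "iv x < p" "[x * iv x = 1] (mod p)" using ivS[OF j1[OF xS(1)] jp[OF xS(1)]] by auto
      have b: "iv (iv x) = x" using iviv[OF j1[OF xS(1)] jp[OF xS(1)]] .
      have "iv x \<noteq> 1" using b xS one by metis
      then have c: "iv x \<in> S1'" using a b xS unfolding S1'_def S1_def S_def by auto
      have d: "iv x \<noteq> x"
      proof
        assume "iv x = x"
        then have "[x * x = 1] (mod p)" using a by simp
        then have "x = 1 \<or> x = p - 1" using sq_one[OF assms(1) j1[OF xS(1)] jp[OF xS(1)]] by blast
        then show False using xS ph unfolding S_def by auto
      qed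
      have "[int (x * iv x) = int 1] (mod int p)" using a(3) by (simp only: cong_int_iff)
      then have e: "[int x * int (iv x) = 1] (mod int p)" by simp
      show "iv x \<in> S1' \<and> iv (iv x) = x \<and> iv x \<noteq> x \<and> [int x * int (iv x) = 1] (mod int p)"
        using b c d e by blast
    qed
  qed
  have prod1: "[(\<Prod>x\<in>S1. int x) = 1] (mod int p)"
  proof -
    have "(\<Prod>x\<in>S1. int x) = int 1 * (\<Prod>x\<in>S1'. int x)"
      using prod.remove[OF fin1(1) oneS1] unfolding S1'_def .
    then have "(\<Prod>x\<in>S1. int x) = (\<Prod>x\<in>S1'. int x)" by simp
    then show ?thesis using P1 by simp
  qed
  define s2 where "s2 x = p - iv x" for x
  have S2f: "s2 x \<in> S2 \<and> s2 (s2 x) = x \<and> [int x * int (s2 x) = -1] (mod int p)" if x: "x \<in> S2" for x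
  proof -
    have xS: "x \<in> S" "h < iv x" using x unfolding S2_def by auto
    have a: "1 \<le> iv x" "iv x < p" "[x * iv x = 1] (mod p)" using ivS[OF j1[OF xS(1)] jp[OF xS(1)]] by auto
    have ai: "[int x * int (iv x) = 1] (mod int p)"
    proof -
      have "[int (x * iv x) = int 1] (mod int p)" using a(3) by (simp only: cong_int_iff)
      then show ?thesis by simp
    qed
    have xh: "1 \<le> x" "x \<le> h" using xS(1) unfolding S_def by auto
    have s2S: "1 \<le> s2 x" "s2 x \<le> h" using a xS ph unfolding s2_def by auto
    have is2: "int (s2 x) = int p - int (iv x)" using a unfolding s2_def by simp
    have "[int x * int p - int x * int (iv x) = 0 - 1] (mod int p)"
      by (rule cong_diff[OF _ ai]) (simp add: cong_0_iff)
    then have c: "[int x * int (s2 x) = -1] (mod int p)" unfolding is2 by (simp add: algebra_simps)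
    have "[int (s2 x) * int (p - x) = int (iv x) * int x] (mod int p)"
    proof -
      have e: "int (p - x) = int p - int x" using xh ph by simp
      have "int (s2 x) * int (p - x) - int (iv x) * int x = int p * (int p - int x - int (iv x))"
        unfolding is2 e by (simp add: algebra_simps)
      then show ?thesis by (simp add: cong_iff_dvd_diff)
    qed
    moreover have "[int (iv x) * int x = 1] (mod int p)" using ai by (simp add: mult.commute)
    ultimately have "[int (s2 x) * int (p - x) = 1] (mod int p)" by (rule cong_trans)
    then have "[int (s2 x * (p - x)) = int 1] (mod int p)" by simp
    then have "[s2 x * (p - x) = 1] (mod p)" by (simp only: cong_int_iff)
    then have iv2: "iv (s2 x) = p - x" using ivu[of "p - x" "s2 x"] xh ph by simp
    then have "s2 (s2 x) = x" unfolding s2_def using xh ph by simp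
    moreover have "s2 x \<in> S2" using iv2 s2S xh ph unfolding S2_def S_def by auto
    ultimately show ?thesis using c by blast
  qed
  have fixsq: "[int x ^ 2 = -1] (mod int p)" if "x \<in> S2" "s2 x = x" for x
    using S2f[OF that(1)] that(2) by (simp add: power2_eq_square)
  have df: "int (dfact (p - 1)) = 2 ^ h * ((\<Prod>x\<in>S1. int x) * (\<Prod>x\<in>S2. int x))"
  proof -
    have "p - 1 = 2 * h" using ph by simp
    then have "int (dfact (p - 1)) = 2 ^ h * int (fact h)" by (simp add: dfact_even)
    also have "int (fact h) = (\<Prod>x\<in>S. int x)" unfolding S_def by (simp add: of_nat_fact fact_prod)
    also have "\<dots> = (\<Prod>x\<in>S1. int x) * (\<Prod>x\<in>S2. int x)"
      unfolding Sdisj(2) by (rule prod.union_disjoint[OF fin1 Sdisj(1)])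
    finally show ?thesis .
  qed
  have tp: "[(2::int) ^ h = (-1) ^ (h - h div 2)] (mod int p)"
    using two_pow[OF assms] unfolding h_def .
  have base: "[int (dfact (p - 1)) = (-1) ^ (h - h div 2) * (1 * (\<Prod>x\<in>S2. int x))] (mod int p)"
    unfolding df by (intro cong_mult tp prod1 cong_refl)
  obtain a where a: "card S1' = 2 * a" using P1 by (auto elim: evenE)
  have mu2: "(mu p + 1) div 2 = a + 1" using muS cS1 a by simp
  have part3: "[int (dfact (p - 1)) = (-1) ^ ((mu p + 1) div 2)] (mod int p)" if p3: "[p = 3] (mod 4)"
  proof -
    have nofix: "s2 x \<noteq> x" if "x \<in> S2" for x
    proof
      assume "s2 x = x"
      then have "[p = 1] (mod 4)" using sqrtm1_mod4[OF assms fixsq[OF that]] by simp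
      then show False using p3 by (simp add: cong_def)
    qed
    have P2: "even (card S2) \<and> [(\<Prod>x\<in>S2. int x) = (-1) ^ (card S2 div 2)] (mod int p)"
      by (rule inv_prod[where s=s2]) (use fin1 S2f nofix in auto)
    obtain b where b: "card S2 = 2 * b" using P2 by (auto elim: evenE)
    have hh: "h = 2 * a + 2 * b + 1" using cardS cS1 a b by simp
    have "[int (dfact (p - 1)) = (-1) ^ (h - h div 2) * (1 * (-1) ^ (card S2 div 2))] (mod int p)"
      using base P2 by (meson cong_mult cong_refl cong_trans)
    also have "(-1) ^ (h - h div 2) * (1 * (-1) ^ (card S2 div 2)) = ((-1::int) ^ (h - h div 2 + card S2 div 2))"
      by (simp only: power_add mult_1_left)
    also have "\<dots> = (-1) ^ ((mu p + 1) div 2)"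
      by (rule neg1_pow_eq) (unfold mu2 hh b, presburger)
    finally show ?thesis .
  qed
  have part1: "[int (dfact (p - 1)) = (-1) ^ ((mu p + 1) div 2) * int (ip p)] (mod int p)" if p1: "[p = 1] (mod 4)"
  proof -
    have heven: "even h" using p1 ph by (simp add: cong_def) presburger
    have "\<exists>x0\<in>S2. s2 x0 = x0"
    proof (rule ccontr)
      assume "\<not> (\<exists>x0\<in>S2. s2 x0 = x0)"
      then have "even (card S2) \<and> [(\<Prod>x\<in>S2. int x) = (-1) ^ (card S2 div 2)] (mod int p)"
        by (intro inv_prod[where s=s2]) (use fin1 S2f in auto)
      then show False using heven cardS cS1 a by auto
    qed
    then obtain x0 where x0: "x0 \<in> S2" "s2 x0 = x0" by blast
    have x0h: "2 * x0 < p" using x0(1) ph unfolding S2_def S_def by auto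
    have x0sq: "[int x0 ^ 2 = -1] (mod int p)" using fixsq[OF x0] .
    have ipx: "ip p = x0" unfolding ip_def
    proof (rule the_equality)
      show "2 * x0 < p \<and> [int x0 ^ 2 = - 1] (mod int p)" using x0h x0sq by simp
      fix i assume "2 * i < p \<and> [int i ^ 2 = - 1] (mod int p)"
      then show "i = x0" using sqrtm1_unique[OF assms(1) _ x0h _ x0sq] by blast
    qed
    define S2' where "S2' = S2 - {x0}"
    have fin2': "finite S2'" unfolding S2'_def using fin1 by simp
    have P2: "even (card S2') \<and> [(\<Prod>x\<in>S2'. int x) = (-1) ^ (card S2' div 2)] (mod int p)"
    proof (rule inv_prod[where s=s2, OF fin2'])
      show "\<forall>x\<in>S2'. s2 x \<in> S2' \<and> s2 (s2 x) = x \<and> s2 x \<noteq> x \<and> [int x * int (s2 x) = -1] (mod int p)"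
      proof
        fix x assume x: "x \<in> S2'"
        then have xs: "x \<in> S2" "x \<noteq> x0" unfolding S2'_def by auto
        have f: "s2 x \<in> S2" "s2 (s2 x) = x" "[int x * int (s2 x) = -1] (mod int p)" using S2f[OF xs(1)] by auto
        have "s2 x \<noteq> x0" using f(2) x0(2) xs(2) by metis
        moreover have "s2 x \<noteq> x"
        proof
          assume "s2 x = x"
          then have "[int x ^ 2 = -1] (mod int p)" using fixsq[OF xs(1)] by simp
          moreover have "2 * x < p" using xs(1) ph unfolding S2_def S_def by auto
          ultimately have "x = x0" using sqrtm1_unique[OF assms(1) _ x0h _ x0sq] by blast
          then show False using xs(2) by simp
        qed
        ultimately show "s2 x \<in> S2' \<and> s2 (s2 x) = x \<and> s2 x \<noteq> x \<and> [int x * int (s2 x) = -1] (mod int p)"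
          using f unfolding S2'_def by blast
      qed
    qed
    obtain c where c: "card S2' = 2 * c" using P2 by (auto elim: evenE)
    have "card S2 > 0" using x0(1) fin1(2) by (auto simp: card_gt_0_iff)
    then have cS2: "card S2 = card S2' + 1" unfolding S2'_def using x0(1) fin1(2)
      by (simp add: card_Diff_singleton_if)
    have pr2: "(\<Prod>x\<in>S2. int x) = int x0 * (\<Prod>x\<in>S2'. int x)"
      using prod.remove[OF fin1(2) x0(1)] unfolding S2'_def .
    have hh: "h = 2 * a + 2 * c + 2" using cardS cS1 cS2 a c by simp
    have "[int (dfact (p - 1)) = (-1) ^ (h - h div 2) * (1 * (int x0 * (-1) ^ (card S2' div 2)))] (mod int p)"
      using base P2 unfolding pr2 by (meson cong_mult cong_refl cong_trans)
    also have "(-1) ^ (h - h div 2) * (1 * (int x0 * (-1) ^ (card S2' div 2))) = ((-1::int) ^ (h - h div 2 + card S2' div 2)) * int x0"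
      by (simp only: power_add mult_1_left mult_ac)
    also have "(-1::int) ^ (h - h div 2 + card S2' div 2) = (-1) ^ ((mu p + 1) div 2)"
      by (rule neg1_pow_eq) (unfold mu2 hh c, presburger)
    finally show ?thesis unfolding ipx .
  qed
  show ?thesis using part1 part3 by blast
qed

end
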